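(* Let $\Omega>0$, let $0<\sigma\leq m_{\min}$ and let $n\geq 2$ be an integer. Then there exist a positive discrete measure $\mu=\sum_{j=1}^{n}a_j\delta_{y_j}$ on $\mathbb R$ with $n$ distinct supports $y_1,\dots,y_n\in\mathbb R$ and amplitudes $a_j>0$, and a positive discrete measure $\hat \mu=\sum_{j=1}^{n-1}\hat a_j \delta_{\hat y_j}$ with $n-1$ supports $\hat y_j\in\mathbb R$ and amplitudes $\hat a_j>0$, such that \[ \max_{\omega\in[-\Omega,\Omega]}\big|\mathcal F[\hat \mu](\omega)-\mathcal F [\mu](\omega)\big|< \sigma, \] and moreover \[ \min_{1\leq j\leq n}|a_j|= m_{\min}, \qquad \min_{p\neq j}|y_p-y_j|= \frac{2e^{-1}}{\Omega}\Big(\frac{\sigma}{m_{\min}}\Big)^{\frac{1}{2n-2}}. \]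
   Context: For a discrete measure $\nu=\sum_{j} c_j\delta_{x_j}$ on $\mathbb R$, its Fourier transform is $\mathcal F[\nu](\omega)=\sum_j c_j e^{i x_j\omega}$, $\omega\in\mathbb R$. Here $\Omega>0$ is the cutoff frequency, $\sigma>0$ the noise level and $m_{\min}>0$ a prescribed minimal amplitude. *)

theory Defs
  imports "HOL-Analysis.Analysis"
begin

text \<open>A discrete measure sum_{j<k} c_j delta_{x_j} is represented by amplitude and
support functions on the index set {0..<k}. Its Fourier transform:\<close>

definition fourier_discrete :: "nat \<Rightarrow> (nat \<Rightarrow> real) \<Rightarrow> (nat \<Rightarrow> real) \<Rightarrow> real \<Rightarrow> complex" where
  "fourier_discrete k c x \<omega> = (\<Sum>j<k. complex_of_real (c j) * exp (\<i> * complex_of_real (x j * \<omega>)))"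

end

theory Submission
  imports Defs
begin


lemma sum_even_odd: "(\<Sum>k<2*M. f k) = (\<Sum>j<M. f (2*j)) + (\<Sum>j<M. f (2*j+1::nat))"
  by (induction M) (auto simp: algebra_simps)

lemma key_identity:
  fixes m h w :: real and M :: nat
  defines "z \<equiv> exp (\<i> * complex_of_real (h * w / 2))"
  shows "fourier_discrete (Suc M) (\<lambda>j. m * real (2*M choose (2*j))) (\<lambda>j. real j * h) w
       - fourier_discrete M (\<lambda>j. m * real (2*M choose (2*j+1))) (\<lambda>j. (2 * real j + 1) * h / 2) w
       = complex_of_real m * (1 - z) ^ (2*M)"
proof -
  have e: "exp (\<i> * complex_of_real (r * h * w / 2)) = z ^ k" if "r = real k" for r k
  proof -
    have "\<i> * complex_of_real (r * h * w / 2) = of_nat k * (\<i> * complex_of_real (h * w / 2))"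
      using that by simp
    then show ?thesis unfolding z_def by (simp only: exp_of_nat_mult)
  qed
  define g where "g k = of_nat (2*M choose k) * (- z) ^ k" for k
  have "(1 - z) ^ (2*M) = (\<Sum>k\<le>2*M. g k)"
    unfolding g_def using binomial_ring[of "-z" 1 "2*M"] by (simp add: mult.commute)
  also have "\<dots> = (\<Sum>k<2*M. g k) + g (2*M)"
    by (simp add: lessThan_Suc_atMost[symmetric])
  also have "\<dots> = (\<Sum>j<Suc M. g (2*j)) + (\<Sum>j<M. g (2*j+1))"
    by (simp add: sum_even_odd)
  finally have bin: "(1 - z) ^ (2*M) = (\<Sum>j<Suc M. g (2*j)) + (\<Sum>j<M. g (2*j+1))" .
  have A: "fourier_discrete (Suc M) (\<lambda>j. m * real (2*M choose (2*j))) (\<lambda>j. real j * h) w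
        = complex_of_real m * (\<Sum>j<Suc M. g (2*j))"
    unfolding fourier_discrete_def sum_distrib_left g_def
  proof (rule sum.cong[OF refl])
    fix j assume "j \<in> {..<Suc M}"
    have "exp (\<i> * complex_of_real (real j * h * w)) = z ^ (2*j)"
      using e[of "real (2*j)" "2*j"] by (simp add: mult.assoc)
    then show "complex_of_real (m * real (2 * M choose (2 * j))) * exp (\<i> * complex_of_real (real j * h * w)) =
         complex_of_real m * (of_nat (2 * M choose (2 * j)) * (- z) ^ (2 * j))"
      by (simp add: power_mult)
  qed
  have B: "fourier_discrete M (\<lambda>j. m * real (2*M choose (2*j+1))) (\<lambda>j. (2 * real j + 1) * h / 2) w
        = - complex_of_real m * (\<Sum>j<M. g (2*j+1))"
    unfolding fourier_discrete_def sum_distrib_left g_def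
  proof (rule sum.cong[OF refl])
    fix j assume "j \<in> {..<M}"
    have "exp (\<i> * complex_of_real ((2 * real j + 1) * h / 2 * w)) = z ^ (2*j+1)"
      using e[of "real (2*j+1)" "2*j+1"] by (simp add: mult.assoc add.commute)
    then show "complex_of_real (m * real (2 * M choose (2 * j + 1))) * exp (\<i> * complex_of_real ((2 * real j + 1) * h / 2 * w)) =
         - complex_of_real m * (of_nat (2 * M choose (2 * j + 1)) * (- z) ^ (2 * j + 1))"
      by (simp add: power_mult)
  qed
  show ?thesis unfolding A B bin by (simp add: algebra_simps)
qed


lemma cmod_1_exp: "cmod (1 - exp (\<i> * complex_of_real t)) \<le> \<bar>t\<bar>"
proof -
  have "(cmod (1 - exp (\<i> * complex_of_real t)))^2 = (1 - cos t)^2 + (sin t)^2"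
    by (simp add: cmod_power2 exp_Euler cos_of_real sin_of_real)
  also have "\<dots> = 2 - 2 * cos t" using sin_cos_squared_add[of t] by (simp add: power2_eq_square algebra_simps)
  also have "\<dots> = 4 * (sin (t/2))^2" using cos_double_sin[of "t/2"] by simp
  also have "\<dots> = (2 * \<bar>sin (t/2)\<bar>)^2" by (simp add: power2_eq_square)
  also have "\<dots> \<le> \<bar>t\<bar>^2"
    using abs_sin_x_le_abs_x[of "t/2"] by (intro power_mono) auto
  finally show ?thesis using abs_ge_zero power2_le_imp_le by blast
qed

theorem theorem2p2:
  fixes \<Omega> \<sigma> m_min :: real and n :: nat
  assumes "\<Omega> > 0" and "0 < \<sigma>" and "\<sigma> \<le> m_min" and "n \<ge> 2"
  shows "\<exists>(a::nat \<Rightarrow> real) (y::nat \<Rightarrow> real) (ah::nat \<Rightarrow> real) (yh::nat \<Rightarrow> real).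
           inj_on y {0..<n} \<and> (\<forall>j<n. a j > 0) \<and>
           inj_on yh {0..<n-1} \<and> (\<forall>j<n-1. ah j > 0) \<and>
           (SUP \<omega>\<in>{-\<Omega>..\<Omega>}. cmod (fourier_discrete (n-1) ah yh \<omega> - fourier_discrete n a y \<omega>)) < \<sigma> \<and>
           (MIN j\<in>{0..<n}. \<bar>a j\<bar>) = m_min \<and>
           (MIN (p, j)\<in>{(p, j). p < n \<and> j < n \<and> p \<noteq> j}. \<bar>y p - y j\<bar>)
             = 2 * exp (-1) / \<Omega> * (\<sigma> / m_min) powr (1 / (2 * real n - 2))"
proof -
  define M where "M = n - 1"
  have nM: "n = Suc M" and M1: "M \<ge> 1" using assms(4) by (auto simp: M_def)
  define s where "s = \<sigma> / m_min"
  have m0: "m_min > 0" using assms by linarith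
  have s0: "s > 0" and s1: "s \<le> 1" using assms m0 by (auto simp: s_def)
  define N where "N = 2 * M"
  have RN: "2 * real n - 2 = real N" by (simp add: N_def nM)
  define h where "h = 2 * exp (-1) / \<Omega> * s powr (1 / real N)"
  have h0: "h > 0" using assms s0 by (simp add: h_def)
  define a where "a j = m_min * real (N choose (2*j))" for j
  define y where "y j = real j * h" for j
  define ah where "ah j = m_min * real (N choose (2*j+1))" for j
  define yh where "yh j = (2 * real j + 1) * h / 2" for j
  have inj1: "inj_on y {0..<n}" unfolding y_def using h0 by (auto simp: inj_on_def)
  have inj2: "inj_on yh {0..<n-1}" unfolding yh_def using h0 by (auto simp: inj_on_def)
  have apos: "\<forall>j<n. a j > 0" unfolding a_def using m0 by (auto simp: N_def nM)
  have ahpos: "\<forall>j<n-1. ah j > 0" unfolding ah_def using m0 by (auto simp: N_def nM)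
  have bound: "cmod (fourier_discrete (n-1) ah yh w - fourier_discrete n a y w) \<le> \<sigma> * exp (-1) ^ N"
    if w: "w \<in> {-\<Omega>..\<Omega>}" for w
  proof -
    have "cmod (fourier_discrete (n-1) ah yh w - fourier_discrete n a y w)
        = cmod (fourier_discrete n a y w - fourier_discrete (n-1) ah yh w)"
      by (simp add: norm_minus_commute)
    also have "\<dots> = m_min * cmod (1 - exp (\<i> * complex_of_real (h * w / 2))) ^ N"
      using key_identity[of M m_min h w] m0 unfolding a_def y_def ah_def yh_def N_def nM
      by (simp add: norm_mult norm_power)
    also have "\<dots> \<le> m_min * (h * \<Omega> / 2) ^ N"
    proof -
      have "cmod (1 - exp (\<i> * complex_of_real (h * w / 2))) \<le> \<bar>h * w / 2\<bar>" by (rule cmod_1_exp)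
      also have "\<dots> \<le> h * \<Omega> / 2" using w h0 by (auto simp: abs_mult abs_le_iff intro: mult_left_mono)
      finally show ?thesis using m0 by (intro mult_left_mono power_mono) auto
    qed
    also have "h * \<Omega> / 2 = exp (-1) * s powr (1 / real N)" using assms(1) by (simp add: h_def)
    also have "(exp (-1) * s powr (1 / real N)) ^ N = exp (-1) ^ N * s"
    proof -
      have "(s powr (1 / real N)) ^ N = s" using s0 M1
        by (simp add: powr_realpow[symmetric] powr_powr N_def)
      then show ?thesis by (simp add: power_mult_distrib)
    qed
    finally show ?thesis using m0 by (simp add: s_def mult.commute)
  qed
  have lt: "\<sigma> * exp (-1) ^ N < \<sigma>"
  proof -
    have "exp (-1::real) ^ N < 1" using M1 power_strict_decreasing[of 0 N "exp (-1::real)"] by (auto simp: N_def)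
    then show ?thesis using assms(2) by simp
  qed
  have sup: "(SUP w\<in>{-\<Omega>..\<Omega>}. cmod (fourier_discrete (n-1) ah yh w - fourier_discrete n a y w)) < \<sigma>"
  proof -
    have "(SUP w\<in>{-\<Omega>..\<Omega>}. cmod (fourier_discrete (n-1) ah yh w - fourier_discrete n a y w)) \<le> \<sigma> * exp (-1) ^ N"
      using assms(1) bound by (intro cSUP_least) auto
    then show ?thesis using lt by linarith
  qed
  have mina: "(MIN j\<in>{0..<n}. \<bar>a j\<bar>) = m_min"
  proof (rule Min_eqI)
    show "finite ((\<lambda>j. \<bar>a j\<bar>) ` {0..<n})" by simp
    show "m_min \<in> (\<lambda>j. \<bar>a j\<bar>) ` {0..<n}"
      using m0 nM by (auto simp: a_def intro!: image_eqI[of _ _ 0])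
    fix x assume "x \<in> (\<lambda>j. \<bar>a j\<bar>) ` {0..<n}"
    then obtain j where j: "j < n" "x = \<bar>a j\<bar>" by auto
    have "2*j \<le> N" using j nM by (simp add: N_def)
    then have "(N choose (2*j)) \<ge> 1" using zero_less_binomial[of "2*j" N] by linarith
    then have "real (N choose (2*j)) \<ge> 1" by linarith
    then have "m_min * 1 \<le> m_min * real (N choose (2*j))" using m0 by (intro mult_left_mono) auto
    then show "m_min \<le> x" using j m0 by (simp add: a_def)
  qed
  have miny: "(MIN (p, j)\<in>{(p, j). p < n \<and> j < n \<and> p \<noteq> j}. \<bar>y p - y j\<bar>) = h"
  proof (rule Min_eqI)
    have "{(p, j). p < n \<and> j < n \<and> p \<noteq> j} \<subseteq> {..<n} \<times> {..<n}" by auto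
    then have "finite {(p, j). p < n \<and> j < n \<and> p \<noteq> j}" by (rule finite_subset) auto
    then show "finite ((\<lambda>(p, j). \<bar>y p - y j\<bar>) ` {(p, j). p < n \<and> j < n \<and> p \<noteq> j})" by simp
    show "h \<in> (\<lambda>(p, j). \<bar>y p - y j\<bar>) ` {(p, j). p < n \<and> j < n \<and> p \<noteq> j}"
      using h0 nM M1 by (auto simp: y_def intro!: image_eqI[of _ _ "(1,0)"])
    fix x assume "x \<in> (\<lambda>(p, j). \<bar>y p - y j\<bar>) ` {(p, j). p < n \<and> j < n \<and> p \<noteq> j}"
    then obtain p j where pj: "p \<noteq> j" "x = \<bar>y p - y j\<bar>" by auto
    have "x = \<bar>real p - real j\<bar> * h" using pj h0 by (simp add: y_def abs_mult left_diff_distrib[symmetric])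
    moreover have "\<bar>real p - real j\<bar> \<ge> 1" using pj(1) by linarith
    ultimately show "h \<le> x" using h0 mult_right_mono[of 1 "\<bar>real p - real j\<bar>" h] by simp
  qed
  show ?thesis
    apply (rule exI[of _ a], rule exI[of _ y], rule exI[of _ ah], rule exI[of _ yh])
    using inj1 inj2 apos ahpos sup mina miny by (simp add: h_def s_def RN)
qed

end
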